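(* For every $f:\{0,1\}^n\to\{0,1\}$ and all sets $J\subseteq K\subseteq[n]$, $\mathrm{SymInf}_f(J)\le\mathrm{SymInf}_f(K)$.
   Context: $\mathcal{S}_J$ is the set of permutations of $[n]$ fixing every element outside $J$; $\pi x$ is the vector whose $\pi(i)$-th coordinate is $x_i$. $\mathrm{SymInf}_f(J)=\Pr_{x,\pi}[f(x)\ne f(\pi x)]$ with $x$ uniform in $\{0,1\}^n$ and $\pi$ uniform in $\mathcal{S}_J$. *)

theory Defs
  imports Complex_Main "HOL-Library.FuncSet" "HOL-Combinatorics.Permutations"
begin

definition cube :: "nat \<Rightarrow> (nat \<Rightarrow> bool) set" where
  "cube n = {0..<n} \<rightarrow>\<^sub>E (UNIV :: bool set)"

text \<open>pi x: the pi(i)-th coordinate of pi x is x_i, i.e. (pi x)_j = x_(pi^-1 j).\<close>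
definition perm_act :: "(nat \<Rightarrow> nat) \<Rightarrow> (nat \<Rightarrow> bool) \<Rightarrow> (nat \<Rightarrow> bool)" where
  "perm_act p x = (\<lambda>j. x (inv p j))"

definition SymGrp :: "nat set \<Rightarrow> (nat \<Rightarrow> nat) set" where
  "SymGrp J = {p. p permutes J}"

definition SymInf :: "nat \<Rightarrow> ((nat \<Rightarrow> bool) \<Rightarrow> bool) \<Rightarrow> nat set \<Rightarrow> real" where
  "SymInf n f J =
     real (card {(x, p). x \<in> cube n \<and> p \<in> SymGrp J \<and> f x \<noteq> f (perm_act p x)})
     / (real (card (cube n)) * real (card (SymGrp J)))"

end

theory Submission
  imports Defs
begin

definition avg :: "'g set \<Rightarrow> ('g \<Rightarrow> 'x \<Rightarrow> 'x) \<Rightarrow> ('x \<Rightarrow> real) \<Rightarrow> 'x \<Rightarrow> real" where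
  "avg G act g x = (\<Sum>p\<in>G. g (act p x)) / real (card G)"

lemma avg_inv:
  assumes rmul: "\<And>p. p \<in> G \<Longrightarrow> bij_betw (\<lambda>s. mul s p) G G"
    and hom: "\<And>p s x. p \<in> G \<Longrightarrow> s \<in> G \<Longrightarrow> x \<in> X \<Longrightarrow> act (mul s p) x = act s (act p x)"
    and "p \<in> G" "x \<in> X"
  shows "avg G act g (act p x) = avg G act g x"
proof -
  have "(\<Sum>s\<in>G. g (act s (act p x))) = (\<Sum>s\<in>G. g (act (mul s p) x))"
    using hom assms(3,4) by simp
  also have "\<dots> = (\<Sum>s\<in>G. g (act s x))"
    using sum.reindex_bij_betw[OF rmul[OF assms(3)], of "\<lambda>s. g (act s x)"] by simp
  finally show ?thesis unfolding avg_def by simp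
qed

lemma avg_pair:
  assumes fin: "finite X" "finite H" "H \<noteq> {}"
    and bij: "\<And>p. p \<in> H \<Longrightarrow> bij_betw (act p) X X"
    and w: "\<And>p x. p \<in> H \<Longrightarrow> x \<in> X \<Longrightarrow> w (act p x) = w x"
  shows "(\<Sum>x\<in>X. avg H act g x * w x) = (\<Sum>x\<in>X. g x * w x)"
proof -
  have cH: "real (card H) > 0" using fin by (simp add: card_gt_0_iff)
  have "(\<Sum>x\<in>X. avg H act g x * w x) = (\<Sum>x\<in>X. \<Sum>p\<in>H. g (act p x) * w x) / real (card H)"
    unfolding avg_def by (simp add: sum_divide_distrib sum_distrib_right)
  also have "(\<Sum>x\<in>X. \<Sum>p\<in>H. g (act p x) * w x) = (\<Sum>p\<in>H. \<Sum>x\<in>X. g (act p x) * w (act p x))"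
    by (subst sum.swap) (auto intro!: sum.cong simp: w)
  also have "\<dots> = (\<Sum>p\<in>H. \<Sum>x\<in>X. g x * w x)"
  proof (rule sum.cong[OF refl])
    fix p assume "p \<in> H"
    show "(\<Sum>x\<in>X. g (act p x) * w (act p x)) = (\<Sum>x\<in>X. g x * w x)"
      using sum.reindex_bij_betw[OF bij[OF \<open>p \<in> H\<close>], of "\<lambda>x. g x * w x"] by simp
  qed
  also have "\<dots> = real (card H) * (\<Sum>x\<in>X. g x * w x)" by simp
  finally show ?thesis using cH by simp
qed

lemma abstract_mono:
  assumes fin: "finite X" "finite G" "H \<noteq> {}" "H \<subseteq> G"
    and bij: "\<And>p. p \<in> G \<Longrightarrow> bij_betw (act p) X X"
    and rmulG: "\<And>p. p \<in> G \<Longrightarrow> bij_betw (\<lambda>s. mul s p) G G"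
    and rmulH: "\<And>p. p \<in> H \<Longrightarrow> bij_betw (\<lambda>s. mul s p) H H"
    and hom: "\<And>p s x. p \<in> G \<Longrightarrow> s \<in> G \<Longrightarrow> x \<in> X \<Longrightarrow> act (mul s p) x = act s (act p x)"
  shows "(\<Sum>x\<in>X. g x * avg G act g x) \<le> (\<Sum>x\<in>X. g x * avg H act g x)"
proof -
  define a where "a = avg H act g"
  define b where "b = avg G act g"
  have finH: "finite H" using fin finite_subset by blast
  have G0: "G \<noteq> {}" using fin by auto
  have bijH: "\<And>p. p \<in> H \<Longrightarrow> bij_betw (act p) X X" using bij fin by auto
  have homH: "\<And>p s x. p \<in> H \<Longrightarrow> s \<in> H \<Longrightarrow> x \<in> X \<Longrightarrow> act (mul s p) x = act s (act p x)"
    using hom fin by auto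
  have ainv: "\<And>p x. p \<in> H \<Longrightarrow> x \<in> X \<Longrightarrow> a (act p x) = a x"
    unfolding a_def by (rule avg_inv[OF rmulH homH]) auto
  have binv: "\<And>p x. p \<in> G \<Longrightarrow> x \<in> X \<Longrightarrow> b (act p x) = b x"
    unfolding b_def by (rule avg_inv[OF rmulG hom]) auto
  have binvH: "\<And>p x. p \<in> H \<Longrightarrow> x \<in> X \<Longrightarrow> b (act p x) = b x"
    using binv fin by auto
  have e1: "(\<Sum>x\<in>X. a x * a x) = (\<Sum>x\<in>X. g x * a x)"
    unfolding a_def by (rule avg_pair[OF fin(1) finH fin(3) bijH]) (auto simp: ainv[unfolded a_def])
  have e2: "(\<Sum>x\<in>X. a x * b x) = (\<Sum>x\<in>X. g x * b x)"
    unfolding a_def by (rule avg_pair[OF fin(1) finH fin(3) bijH]) (auto simp: binvH)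
  have e3: "(\<Sum>x\<in>X. b x * b x) = (\<Sum>x\<in>X. g x * b x)"
    unfolding b_def by (rule avg_pair[OF fin(1) fin(2) G0 bij]) (auto simp: binv[unfolded b_def])
  have "0 \<le> (\<Sum>x\<in>X. (a x - b x) * (a x - b x))"
    by (intro sum_nonneg) simp
  also have "\<dots> = (\<Sum>x\<in>X. a x * a x) - 2 * (\<Sum>x\<in>X. a x * b x) + (\<Sum>x\<in>X. b x * b x)"
    by (simp add: algebra_simps sum.distrib sum_subtractf sum_distrib_left)
  finally show ?thesis using e1 e2 e3 unfolding a_def b_def by simp
qed

lemma count_eq:
  fixes f :: "'x \<Rightarrow> bool"
  assumes fin: "finite X" "finite G"
    and bij: "\<And>p. p \<in> G \<Longrightarrow> bij_betw (act p) X X"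
  defines "g \<equiv> (\<lambda>x. if f x then 1 else 0 :: real)"
  shows "real (card {(x, p). x \<in> X \<and> p \<in> G \<and> f x \<noteq> f (act p x)})
       = 2 * real (card G) * (\<Sum>x\<in>X. g x) - 2 * real (card G) * (\<Sum>x\<in>X. g x * avg G act g x)"
proof -
  have set: "{(x, p). x \<in> X \<and> p \<in> G \<and> f x \<noteq> f (act p x)} = Sigma X (\<lambda>x. {p\<in>G. f x \<noteq> f (act p x)})"
    by auto
  have "real (card {(x, p). x \<in> X \<and> p \<in> G \<and> f x \<noteq> f (act p x)})
      = (\<Sum>x\<in>X. real (card {p\<in>G. f x \<noteq> f (act p x)}))"
    unfolding set using fin by (simp add: card_SigmaI)
  also have "\<dots> = (\<Sum>x\<in>X. \<Sum>p\<in>G. g x + g (act p x) - 2 * g x * g (act p x))"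
  proof (rule sum.cong[OF refl])
    fix x
    have "real (card {p\<in>G. f x \<noteq> f (act p x)}) = (\<Sum>p\<in>{p\<in>G. f x \<noteq> f (act p x)}. 1)" by simp
    also have "\<dots> = (\<Sum>p\<in>G. if f x \<noteq> f (act p x) then 1 else 0)"
      using sum.inter_filter[OF fin(2), of "\<lambda>_. 1::real" "\<lambda>p. f x \<noteq> f (act p x)"] by simp
    also have "\<dots> = (\<Sum>p\<in>G. g x + g (act p x) - 2 * g x * g (act p x))"
      by (rule sum.cong) (auto simp: g_def)
    finally show "real (card {p\<in>G. f x \<noteq> f (act p x)}) = \<dots>" .
  qed
  also have "\<dots> = (\<Sum>x\<in>X. \<Sum>p\<in>G. g x) + (\<Sum>x\<in>X. \<Sum>p\<in>G. g (act p x)) - 2 * (\<Sum>x\<in>X. g x * (\<Sum>p\<in>G. g (act p x)))"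
    by (simp add: sum.distrib sum_subtractf sum_distrib_left mult.assoc)
  also have "(\<Sum>x\<in>X. \<Sum>p\<in>G. g (act p x)) = (\<Sum>p\<in>G. \<Sum>x\<in>X. g x)"
  proof -
    have "\<And>p. p \<in> G \<Longrightarrow> (\<Sum>x\<in>X. g (act p x)) = (\<Sum>x\<in>X. g x)"
      using sum.reindex_bij_betw[OF bij] by blast
    then show ?thesis by (subst sum.swap) (rule sum.cong, auto)
  qed
  also have "(\<Sum>x\<in>X. g x * (\<Sum>p\<in>G. g (act p x))) = real (card G) * (\<Sum>x\<in>X. g x * avg G act g x)"
  proof (cases "G = {}")
    case True then show ?thesis by simp
  next
    case False
    then have "real (card G) > 0" using fin by (simp add: card_gt_0_iff)
    then show ?thesis unfolding avg_def times_divide_eq_right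
      by (simp add: sum_divide_distrib[symmetric])
  qed
  finally show ?thesis by (simp add: sum_distrib_right[symmetric] algebra_simps)
qed


lemma perm_act_comp:
  assumes "s permutes K" "p permutes K"
  shows "perm_act (s \<circ> p) x = perm_act s (perm_act p x)"
  using assms by (simp add: perm_act_def o_inv_distrib permutes_bij)

lemma perm_act_cube:
  assumes "p permutes K" "K \<subseteq> {0..<n}" "x \<in> cube n"
  shows "perm_act p x \<in> cube n"
proof -
  have "\<And>j. j \<notin> {0..<n} \<Longrightarrow> inv p j = j"
    using permutes_inv[OF assms(1)] assms(2) by (meson permutes_not_in subsetD)
  then show ?thesis using assms(3) unfolding cube_def perm_act_def
    by (auto simp: PiE_iff extensional_def)
qed

lemma perm_act_bij:
  assumes "p permutes K" "K \<subseteq> {0..<n}"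
  shows "bij_betw (perm_act p) (cube n) (cube n)"
proof (rule bij_betw_byWitness[where f'="perm_act (inv p)"])
  have ip: "inv p permutes K" using permutes_inv[OF assms(1)] .
  show "\<forall>x\<in>cube n. perm_act (inv p) (perm_act p x) = x"
    using assms(1) by (simp add: perm_act_def permutes_inverses inv_inv_eq permutes_bij)
  show "\<forall>x\<in>cube n. perm_act p (perm_act (inv p) x) = x"
    using assms(1) by (simp add: perm_act_def permutes_inverses inv_inv_eq permutes_bij)
  show "perm_act p ` cube n \<subseteq> cube n" using perm_act_cube[OF assms] by auto
  show "perm_act (inv p) ` cube n \<subseteq> cube n" using perm_act_cube[OF ip assms(2)] by auto
qed

lemma rmul_bij:
  assumes "p permutes K"
  shows "bij_betw (\<lambda>s. s \<circ> p) (SymGrp K) (SymGrp K)"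
proof (rule bij_betw_byWitness[where f'="\<lambda>s. s \<circ> inv p"])
  show "\<forall>s\<in>SymGrp K. s \<circ> p \<circ> inv p = s"
    using assms by (simp add: o_assoc[symmetric] permutes_inv_o)
  show "\<forall>s\<in>SymGrp K. s \<circ> inv p \<circ> p = s"
    using assms by (simp add: o_assoc[symmetric] permutes_inv_o)
  show "(\<lambda>s. s \<circ> p) ` SymGrp K \<subseteq> SymGrp K"
    using assms by (auto simp: SymGrp_def permutes_compose)
  show "(\<lambda>s. s \<circ> inv p) ` SymGrp K \<subseteq> SymGrp K"
    using assms by (auto simp: SymGrp_def permutes_compose permutes_inv)
qed

lemma SymInf_eq:
  fixes f :: "(nat \<Rightarrow> bool) \<Rightarrow> bool"
  assumes "K \<subseteq> {0..<n}"
  defines "g \<equiv> (\<lambda>x. if f x then 1 else 0 :: real)"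
  shows "SymInf n f K = (2 * (\<Sum>x\<in>cube n. g x) - 2 * (\<Sum>x\<in>cube n. g x * avg (SymGrp K) perm_act g x)) / real (card (cube n))" (is "_ = ?rhs")
proof -
  have finX: "finite (cube n)" unfolding cube_def by (simp add: finite_PiE)
  have finK: "finite K" using assms(1) finite_subset by blast
  have finG: "finite (SymGrp K)" unfolding SymGrp_def using finite_permutations[OF finK] .
  have "id \<in> SymGrp K" by (simp add: SymGrp_def permutes_id)
  then have cG: "real (card (SymGrp K)) > 0" using finG by (auto simp: card_gt_0_iff)
  have bij: "\<And>p. p \<in> SymGrp K \<Longrightarrow> bij_betw (perm_act p) (cube n) (cube n)"
    using perm_act_bij assms(1) by (auto simp: SymGrp_def)
  have c: "real (card {(x, p). x \<in> cube n \<and> p \<in> SymGrp K \<and> f x \<noteq> f (perm_act p x)})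
       = 2 * real (card (SymGrp K)) * (\<Sum>x\<in>cube n. g x) - 2 * real (card (SymGrp K)) * (\<Sum>x\<in>cube n. g x * avg (SymGrp K) perm_act g x)"
    unfolding g_def by (rule count_eq[OF finX finG bij])
  have "SymInf n f K = (real (card (SymGrp K)) * (2 * (\<Sum>x\<in>cube n. g x) - 2 * (\<Sum>x\<in>cube n. g x * avg (SymGrp K) perm_act g x)))
      / (real (card (SymGrp K)) * real (card (cube n)))"
    unfolding SymInf_def c by (simp add: algebra_simps)
  also have "\<dots> = ?rhs" using cG by (intro mult_divide_mult_cancel_left) simp
  finally show ?thesis .
qed

theorem lemma4:
  fixes n :: nat and f :: "(nat \<Rightarrow> bool) \<Rightarrow> bool" and J K :: "nat set"
  assumes "J \<subseteq> K" and "K \<subseteq> {0..<n}"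
  shows "SymInf n f J \<le> SymInf n f K"
proof -
  define g where "g = (\<lambda>x. if f x then 1 else 0 :: real)"
  have J: "J \<subseteq> {0..<n}" using assms by blast
  have finX: "finite (cube n)" unfolding cube_def by (simp add: finite_PiE)
  have finK: "finite K" using assms(2) finite_subset by blast
  have finG: "finite (SymGrp K)" unfolding SymGrp_def using finite_permutations[OF finK] .
  have H0: "SymGrp J \<noteq> {}" by (auto simp: SymGrp_def intro: permutes_id)
  have HG: "SymGrp J \<subseteq> SymGrp K" using assms(1) by (auto simp: SymGrp_def intro: permutes_subset)
  have "(\<Sum>x\<in>cube n. g x * avg (SymGrp K) perm_act g x) \<le> (\<Sum>x\<in>cube n. g x * avg (SymGrp J) perm_act g x)"
  proof (rule abstract_mono[OF finX finG H0 HG, where mul="\<lambda>s p. s \<circ> p"])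
    show "\<And>p. p \<in> SymGrp K \<Longrightarrow> bij_betw (perm_act p) (cube n) (cube n)"
      using perm_act_bij assms(2) by (auto simp: SymGrp_def)
    show "\<And>p. p \<in> SymGrp K \<Longrightarrow> bij_betw (\<lambda>s. s \<circ> p) (SymGrp K) (SymGrp K)"
      using rmul_bij by (auto simp: SymGrp_def)
    show "\<And>p. p \<in> SymGrp J \<Longrightarrow> bij_betw (\<lambda>s. s \<circ> p) (SymGrp J) (SymGrp J)"
      using rmul_bij by (auto simp: SymGrp_def)
    show "\<And>p s x. p \<in> SymGrp K \<Longrightarrow> s \<in> SymGrp K \<Longrightarrow> x \<in> cube n \<Longrightarrow> perm_act (s \<circ> p) x = perm_act s (perm_act p x)"
      using perm_act_comp by (auto simp: SymGrp_def)
  qed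
  from this[unfolded g_def] show ?thesis unfolding SymInf_eq[OF J, of f] SymInf_eq[OF assms(2), of f] g_def
    by (intro divide_right_mono) auto
qed

end
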